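(* For every positive integer $n$, $\delta(n)\le 13\log_6 n+7$; that is, $n\in E_k$ for every integer $k\ge 13\log_6 n+7$.
   Context: For a finite nonempty multiset $S$ of real numbers, $V(S)$ is the smallest set of real numbers such that: (1) if $|S|=1$ then $S\subseteq V(S)$; (2) if $|S|\ge 2$, then for all nonempty multisets $A,B$ with $A+B=S$ (multiplicities add) and all $a\in V(A)$, $b\in V(B)$, each of $a+b,\ a-b,\ b-a,\ ab,\ a/b,\ b/a,\ a^b,\ b^a$ lies in $V(S)$ whenever it is a well-defined real number; (3) if $a\in V(S)$ is a nonnegative integer then $a!\in V(S)$ (with $0!=1$). Let $D=\{0,\dots,9\}$; for $k\ge1$, $E_k$ is the intersection of $V(S)$ over all multisets $S$ of size $k$ with all elements in $D$ (one has $E_k\subseteq E_{k+1}$). For a number $n$, $\delta(n)=\min\{k\ge1: n\in E_k\}$. *)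

theory Defs
  imports Complex_Main "HOL-Library.Multiset"
begin

text \<open>Real exponentiation x^y, defined only when it is a well-defined real number
  (conservative convention): x > 0 (any y); x = 0 and y > 0 (value 0);
  x \<noteq> 0 and y an integer (value x powi y).\<close>
definition pow_vals :: "real \<Rightarrow> real \<Rightarrow> real set" where
  "pow_vals x y =
     {z. (x > 0 \<and> z = x powr y)
       \<or> (x = 0 \<and> y > 0 \<and> z = 0)
       \<or> (x \<noteq> 0 \<and> y \<in> \<int> \<and> z = x powi \<lfloor>y\<rfloor>)}"

definition ops :: "real \<Rightarrow> real \<Rightarrow> real set" where
  "ops a b =
     {a + b, a - b, b - a, a * b}
     \<union> (if b \<noteq> 0 then {a / b} else {})
     \<union> (if a \<noteq> 0 then {b / a} else {})
     \<union> pow_vals a b \<union> pow_vals b a"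

inductive V :: "real multiset \<Rightarrow> real \<Rightarrow> bool" where
  single: "V {#x#} x"
| comb: "A \<noteq> {#} \<Longrightarrow> B \<noteq> {#} \<Longrightarrow> V A a \<Longrightarrow> V B b \<Longrightarrow> c \<in> ops a b \<Longrightarrow> V (A + B) c"
| factorial: "V S a \<Longrightarrow> a \<in> \<int> \<Longrightarrow> a \<ge> 0 \<Longrightarrow> V S (fact (nat \<lfloor>a\<rfloor>))"

definition E :: "nat \<Rightarrow> real set" where
  "E k = {x. \<forall>S. size S = k \<and> set_mset S \<subseteq> real ` {0..9} \<longrightarrow> V S x}"

end

theory Submission
  imports Defs
begin

lemma sz: assumes "finite A" "set_mset M \<subseteq> A" shows "size M = sum (count M) A"
proof -
  have "size M = sum (count M) (set_mset M)" by (rule size_multiset_overloaded_eq)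
  also have "\<dots> = sum (count M) A"
    using assms by (intro sum.mono_neutral_left) (auto simp: count_eq_zero_iff)
  finally show ?thesis .
qed

lemma ops_add: "a + b \<in> ops a b" by (simp add: ops_def)
lemma ops_diff: "a - b \<in> ops a b" by (simp add: ops_def)
lemma ops_mult: "a * b \<in> ops a b" by (simp add: ops_def)
lemma ops_div: "b \<noteq> 0 \<Longrightarrow> a / b \<in> ops a b" by (simp add: ops_def)
lemma ops_one: "1 \<in> ops 1 b" by (simp add: ops_def pow_vals_def)

inductive W :: "nat \<Rightarrow> real \<Rightarrow> bool" where
  one: "W 1 1"
| cmb: "W i a \<Longrightarrow> W j b \<Longrightarrow> c \<in> ops a b \<Longrightarrow> W (i+j) c"
| fct: "W j a \<Longrightarrow> a \<in> \<int> \<Longrightarrow> a \<ge> 0 \<Longrightarrow> W j (fact (nat \<lfloor>a\<rfloor>))"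

lemma W_pos: "W j x \<Longrightarrow> j \<ge> 1"
  by (induction rule: W.induct) auto

definition good :: "nat \<Rightarrow> real multiset \<Rightarrow> bool" where
  "good j S = (\<exists>Ps. length Ps = j \<and> (\<forall>P\<in>set Ps. P \<noteq> {#} \<and> V P 1) \<and> S = sum_list Ps)"

lemma good_ne: "good j S \<Longrightarrow> j \<ge> 1 \<Longrightarrow> S \<noteq> {#}"
proof -
  assume g: "good j S" and j: "j \<ge> 1"
  obtain Ps where P: "length Ps = j" "\<forall>P\<in>set Ps. P \<noteq> {#} \<and> V P 1" "S = sum_list Ps"
    using g good_def by auto
  obtain Q Qs where "Ps = Q # Qs" using P(1) j by (cases Ps) auto
  then show ?thesis using P by auto
qed

lemma good_split: assumes "good (i+j) S"
  shows "\<exists>A B. S = A + B \<and> good i A \<and> good j B"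
proof -
  obtain Ps where P: "length Ps = i + j" "\<forall>P\<in>set Ps. P \<noteq> {#} \<and> V P 1" "S = sum_list Ps"
    using assms good_def by auto
  have "S = sum_list (take i Ps) + sum_list (drop i Ps)"
    using P(3) by (metis append_take_drop_id sum_list_append)
  moreover have "good i (sum_list (take i Ps))" unfolding good_def
    using P by (intro exI[of _ "take i Ps"]) (auto dest: in_set_takeD)
  moreover have "good j (sum_list (drop i Ps))" unfolding good_def
    using P by (intro exI[of _ "drop i Ps"]) (auto dest: in_set_dropD)
  ultimately show ?thesis by blast
qed

lemma W_V: "W j x \<Longrightarrow> good j S \<Longrightarrow> V S x"
proof (induction arbitrary: S rule: W.induct)
  case one
  then obtain P where "S = P" "V P 1" unfolding good_def
    by (auto simp: length_Suc_conv)
  then show ?case by simp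
next
  case (cmb i a j b c)
  obtain A B where AB: "S = A + B" "good i A" "good j B" using good_split cmb.prems by blast
  have "A \<noteq> {#}" using good_ne AB W_pos cmb by blast
  moreover have "B \<noteq> {#}" using good_ne AB W_pos cmb by blast
  ultimately show ?case using AB cmb V.comb by blast
next
  case (fct j a)
  then show ?case by (simp add: V.factorial)
qed

lemma V_ex: "R \<noteq> {#} \<Longrightarrow> \<exists>x. V R x"
proof (induction R)
  case empty then show ?case by simp
next
  case (add y R)
  show ?case
  proof (cases "R = {#}")
    case True then show ?thesis using V.single by auto
  next
    case False
    then obtain x where "V R x" using add by auto
    then have "V ({#y#} + R) (y + x)" using V.comb[of "{#y#}" R y x] V.single False ops_add by auto
    then show ?thesis by auto
  qed
qed

lemma V_one_absorb: assumes "V P 1" "P \<noteq> {#}" shows "V (P + R) 1"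
proof (cases "R = {#}")
  case True then show ?thesis using assms by simp
next
  case False
  then obtain x where "V R x" using V_ex by auto
  then show ?thesis using V.comb[of P R 1 x 1] assms False ops_one by auto
qed

lemma extract1:
  assumes D: "set_mset S \<subseteq> real ` {0..9}" and sz5: "size S \<ge> 5"
  shows "\<exists>P. P \<subseteq># S \<and> P \<noteq> {#} \<and> size P \<le> 2 \<and> V P 1"
proof -
  have V0: "V {#0#} 1" using V.factorial[OF V.single[of 0]] by simp
  have V1: "V {#1#} 1" using V.single by simp
  have Vaa: "V {#a,a#} 1" if "a \<noteq> 0" for a :: real
    using V.comb[of "{#a#}" "{#a#}" a a 1] V.single ops_div[of a a] that by simp
  have Vsucc: "V {#a,a+1#} 1" for a :: real
    using V.comb[of "{#a+1#}" "{#a#}" "a+1" a 1] V.single ops_diff[of "a+1" a] by simp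
  show ?thesis
  proof (rule ccontr)
    assume N0: "\<not> ?thesis"
    have N: False if "P \<subseteq># S" "P \<noteq> {#}" "size P \<le> 2" "V P 1" for P
      using N0 that by blast
    have c0: "count S 0 = 0"
    proof (rule ccontr)
      assume "count S 0 \<noteq> 0"
      then have "{#0#} \<subseteq># S" by (simp add: subseteq_mset_def)
      then show False using N[of "{#0#}"] V0 by simp
    qed
    have c1: "count S 1 = 0"
    proof (rule ccontr)
      assume "count S 1 \<noteq> 0"
      then have "{#1#} \<subseteq># S" by (simp add: subseteq_mset_def)
      then show False using N[of "{#1#}"] V1 by simp
    qed
    have cb: "count S a + count S (a+1) \<le> 1" if "a > 0" for a :: real
    proof (rule ccontr)
      assume H: "\<not> count S a + count S (a+1) \<le> 1"
      show False
      proof (cases "count S a \<ge> 2")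
        case True
        then have "{#a,a#} \<subseteq># S" by (simp add: subseteq_mset_def)
        then show False using N[of "{#a,a#}"] Vaa[of a] that by simp
      next
        case F1: False
        show False
        proof (cases "count S (a+1) \<ge> 2")
          case True
          then have "{#a+1,a+1#} \<subseteq># S" by (simp add: subseteq_mset_def)
          then show False using N[of "{#a+1,a+1#}"] Vaa[of "a+1"] that by simp
        next
          case False
          then have "count S a \<ge> 1" "count S (a+1) \<ge> 1" using H F1 by linarith+
          then have "{#a,a+1#} \<subseteq># S" by (auto simp: subseteq_mset_def)
          then show False using N[of "{#a,a+1#}"] Vsucc[of a] by simp
        qed
      qed
    qed
    have "size S = sum (count S) (real ` {0..9})" using D by (intro sz) auto
    also have "\<dots> = (\<Sum>i\<in>{0..9}. count S (real i))"
      by (subst sum.reindex) (auto simp: inj_on_def)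
    also have "\<dots> = count S 0 + count S 1 + (count S 2 + count S (2+1)) + (count S 4 + count S (4+1))
       + (count S 6 + count S (6+1)) + (count S 8 + count S (8+1))"
    proof -
      have e: "{0..9::nat} = {0,1,2,3,4,5,6,7,8,9}" by auto
      show ?thesis unfolding e by (simp add: algebra_simps)
    qed
    also have "\<dots> \<le> 4" using c0 c1 cb[of 2] cb[of 4] cb[of 6] cb[of 8] by simp
    finally show False using sz5 by simp
  qed
qed

lemma size_good0:
  "set_mset S \<subseteq> real ` {0..9} \<Longrightarrow> size S \<ge> 2*j+5 \<Longrightarrow> good (Suc j) S"
proof (induction j arbitrary: S)
  case 0
  have "size S \<ge> 5" using "0.prems"(2) by simp
  then obtain P where P: "P \<subseteq># S" "P \<noteq> {#}" "V P 1"
    using extract1[OF "0.prems"(1)] by blast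
  have SP: "S = P + (S - P)" using P(1) by (rule subset_mset.add_diff_inverse[symmetric])
  have "V (P + (S - P)) 1" by (rule V_one_absorb[OF P(3) P(2)])
  then have "V S 1" using SP by simp
  moreover have "S \<noteq> {#}"
  proof
    assume "S = {#}"
    then show False using P(1) P(2) by simp
  qed
  ultimately show ?case unfolding good_def by (intro exI[of _ "[S]"]) simp
next
  case (Suc j)
  have "size S \<ge> 5" using Suc.prems(2) by simp
  then obtain P where P: "P \<subseteq># S" "P \<noteq> {#}" "V P 1" "size P \<le> 2"
    using extract1[OF Suc.prems(1)] by blast
  have "set_mset (S - P) \<subseteq> set_mset S" by (auto dest: in_diffD)
  then have D: "set_mset (S - P) \<subseteq> real ` {0..9}" using Suc.prems(1) by (rule order_trans)
  have "size (S - P) = size S - size P" using P(1) by (rule size_Diff_submset)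
  then have "size (S - P) \<ge> 2*j+5" using Suc.prems(2) P(4) by arith
  then have "good (Suc j) (S - P)" using Suc.IH D by blast
  then obtain Ps where Ps: "length Ps = Suc j" "\<forall>Q\<in>set Ps. Q \<noteq> {#} \<and> V Q 1" "S - P = sum_list Ps"
    unfolding good_def by blast
  have SP: "S = P + (S - P)" using P(1) by (rule subset_mset.add_diff_inverse[symmetric])
  have "S = sum_list (P # Ps)" using SP Ps(3) by simp
  then show ?case unfolding good_def using Ps P(2,3) by (intro exI[of _ "P # Ps"]) simp
qed

lemma size_good: "j \<ge> 1 \<Longrightarrow> set_mset S \<subseteq> real ` {0..9} \<Longrightarrow> size S \<ge> 2*j+3 \<Longrightarrow> good j S"
  using size_good0[of S "j - 1"] by (cases j) auto

lemma W_add: "W i a \<Longrightarrow> W l b \<Longrightarrow> W (i+l) (a+b)" using W.cmb ops_add by blast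
lemma W_sub: "W i a \<Longrightarrow> W l b \<Longrightarrow> W (i+l) (a-b)" using W.cmb ops_diff by blast
lemma W_mul: "W i a \<Longrightarrow> W l b \<Longrightarrow> W (i+l) (a*b)" using W.cmb ops_mult by blast

lemma W_add': "W i a \<Longrightarrow> W l b \<Longrightarrow> m = i+l \<Longrightarrow> W m (a+b)" using W_add by blast
lemma W_sub': "W i a \<Longrightarrow> W l b \<Longrightarrow> m = i+l \<Longrightarrow> W m (a-b)" using W_sub by blast

lemma W_nat: "n \<ge> 1 \<Longrightarrow> W n (real n)"
proof (induction n rule: dec_induct)
  case base then show ?case using W.one by simp
next
  case (step n)
  have "W (n+1) (real n + 1)" using W_add[OF step(3) W.one] .
  then show ?case by (metis Suc_eq_plus1 of_nat_Suc add.commute)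
qed

lemma W6: "W 3 6"
proof -
  have "W 3 (fact (nat \<lfloor>3::real\<rfloor>))" using W.fct[OF W_nat[of 3]] by simp
  then show ?thesis by (simp add: fact_numeral)
qed

lemma W_times6: "W j q \<Longrightarrow> W (j+3) (q*6)" using W_mul[OF _ W6] by blast

lemma mono_step:
  fixes j c b q n :: nat
  assumes "36^j \<le> 1296*q^13" "36^c \<le> b^13" "b*q \<le> n"
  shows "36^(j+c) \<le> 1296*n^13"
proof -
  have "(36::nat)^(j+c) = 36^j*36^c" by (simp add: power_add)
  also have "\<dots> \<le> (1296*q^13)*b^13" using assms(1,2) by (intro mult_mono) auto
  also have "\<dots> = 1296*(b*q)^13" by (simp add: power_mult_distrib)
  also have "\<dots> \<le> 1296*n^13" using assms(3) by (intro mult_left_mono power_mono) auto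
  finally show ?thesis .
qed

lemma build: "n \<ge> 1 \<Longrightarrow> \<exists>j. W j (real n) \<and> 36^j \<le> 1296 * n^13"
proof (induction n rule: less_induct)
  case (less n)
  show ?case
  proof (cases "n \<le> 5")
    case True
    then have "n \<in> {1,2,3,4,5}" using less.prems by auto
    then have "36^n \<le> 1296 * n^13" by auto
    then show ?thesis using W_nat less.prems by blast
  next
    case False
    define q where "q = n div 6"
    define r where "r = n mod 6"
    have n: "n = 6*q + r" unfolding q_def r_def by simp
    have q1: "q \<ge> 1" "q < n" using False unfolding q_def by auto
    have r6: "r < 6" unfolding r_def by simp
    have q2: "q + 1 < n" "q+1 \<ge> 1" using False unfolding q_def by auto
    show ?thesis
    proof (cases "r \<le> 3")
      case True
      obtain j where j: "W j (real q)" "36^j \<le> 1296 * q^13" using less.IH q1 by blast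
      have W0: "W (j+3) (real q * 6)" using W_times6[OF j(1)] .
      have b: "36^6 \<le> (6::nat)^13" "6*q \<le> n" using n by auto
      have "r = 0 \<or> r = 1 \<or> r = 2 \<or> r = 3" using True by auto
      then show ?thesis
      proof (elim disjE)
        assume r: "r = 0"
        have "real n = real q * 6" using n r by simp
        moreover have "36^(j+3) \<le> 1296*n^13" by (rule mono_step[OF j(2), of 3 6]) (use n in auto)
        ultimately show ?thesis using W0 by metis
      next
        assume r: "r = 1"
        have "W (j+4) (real q * 6 + 1)" using W_add'[OF W0 W.one, of "j+4"] by simp
        moreover have "real n = real q * 6 + 1" using n r by simp
        moreover have "36^(j+4) \<le> 1296*n^13" by (rule mono_step[OF j(2), of 4 6]) (use n in auto)
        ultimately show ?thesis by metis
      next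
        assume r: "r = 2"
        have "W (j+5) (real q * 6 + real 2)" using W_add'[OF W0 W_nat[of 2], of "j+5"] by simp
        moreover have "real n = real q * 6 + real 2" using n r by simp
        moreover have "36^(j+5) \<le> 1296*n^13" by (rule mono_step[OF j(2), of 5 6]) (use n in auto)
        ultimately show ?thesis by metis
      next
        assume r: "r = 3"
        have "W (j+6) (real q * 6 + real 3)" using W_add'[OF W0 W_nat[of 3], of "j+6"] by simp
        moreover have "real n = real q * 6 + real 3" using n r by simp
        moreover have "36^(j+6) \<le> 1296*n^13" by (rule mono_step[OF j(2), of 6 6]) (use n in auto)
        ultimately show ?thesis by metis
      qed
    next
      case False
      obtain j where j: "W j (real (q+1))" "36^j \<le> 1296 * (q+1)^13" using less.IH q2 by blast
      have W0: "W (j+3) (real (q+1) * 6)" using W_times6[OF j(1)] .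
      have b: "5*(q+1) \<le> n" using n q1 False by auto
      have "r = 4 \<or> r = 5" using False r6 by auto
      then show ?thesis
      proof (elim disjE)
        assume r: "r = 4"
        have "W (j+5) (real (q+1) * 6 - real 2)" using W_sub'[OF W0 W_nat[of 2], of "j+5"] by simp
        moreover have "real n = real (q+1) * 6 - real 2" using n r by simp
        moreover have "36^(j+5) \<le> 1296*n^13" by (rule mono_step[OF j(2), of 5 5]) (use b in auto)
        ultimately show ?thesis by metis
      next
        assume r: "r = 5"
        have "W (j+4) (real (q+1) * 6 - 1)" using W_sub'[OF W0 W.one, of "j+4"] by simp
        moreover have "real n = real (q+1) * 6 - 1" using n r by simp
        moreover have "36^(j+4) \<le> 1296*n^13" by (rule mono_step[OF j(2), of 4 5]) (use b in auto)
        ultimately show ?thesis by metis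
      qed
    qed
  qed
qed

theorem theorem6p2:
  fixes n k :: nat
  assumes "n \<ge> 1"
    and "real k \<ge> 13 * log 6 (real n) + 7"
  shows "real n \<in> E k"
proof -
  obtain j where j: "W j (real n)" "36^j \<le> 1296 * n^13" using build assms(1) by blast
  have j1: "j \<ge> 1" using W_pos j(1) .
  have "real (36^j) \<le> real (1296 * n^13)" using j(2) by (simp only: of_nat_le_iff)
  then have le: "(6::real)^(2*j) \<le> 6^4 * real n^13" by (simp add: power_mult)
  have "log 6 ((6::real)^(2*j)) \<le> log 6 (6^4 * real n^13)"
    using le assms(1) by (subst log_le_cancel_iff) auto
  also have "log 6 (6^4 * real n^13) = log 6 (6^4) + log 6 (real n^13)"
    using assms(1) by (intro log_mult_pos) auto
  also have "\<dots> = 4 + 13 * log 6 (real n)"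
    using assms(1) by (simp only: log_pow_cancel log_nat_power)
  finally have "real (2*j) \<le> 4 + 13 * log 6 (real n)" by simp
  then have "2*j+3 \<le> k" using assms(2) by linarith
  show ?thesis unfolding E_def
  proof (intro CollectI allI impI)
    fix S assume S: "size S = k \<and> set_mset S \<subseteq> real ` {0..9}"
    then have "good j S" using size_good[OF j1] \<open>2*j+3 \<le> k\<close> by auto
    then show "V S (real n)" using W_V j(1) by blast
  qed
qed

end
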